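(* Let $\Omega\subseteq\mathbb{R}^d$ be open and $f\in\mathcal{E}(\Omega)=C^\infty(\Omega)$. Then for every compact $K\subset\Omega$, every $\alpha\in\mathbb{N}_0^d$ and every $p\in\mathbb{N}$ there exists $n\in\mathbb{N}_0$ such that for every $\varphi\in\mathcal{D}_n$, $$\sup_{x\in K}\left|\partial^\alpha(f\circledast\varphi)(x)-\partial^\alpha f(x)\right|\le (R_\varphi)^p.$$
   Context: $\mathcal{E}(\Omega)$ denotes the $C^\infty$ functions $\Omega\to\mathbb{C}$, regarded as distributions via $(f|\tau)=\int_\Omega f\tau$. $\mathcal{D}_0=\mathcal{D}(\mathbb{R}^d)$ is the space of compactly supported $C^\infty$ functions $\mathbb{R}^d\to\mathbb{C}$. For $\varphi\in\mathcal{D}_0$ let $R_\varphi=\sup\{\|x\|:\varphi(x)\neq0\}$ if $\varphi\neq0$, $R_0=1$. For $n\in\mathbb{N}$, $\mathcal{D}_n$ is the set of $\varphi\in\mathcal{D}_0$ that are real-valued, even, with $R_\varphi\le1/n$, $\int\varphi=1$, $\int x^\alpha\varphi(x)dx=0$ for $1\le|\alpha|\le n$, $\int|\varphi|\le1+1/n$, and $\sup_x|\partial^\alpha\varphi(x)|\le R_\varphi^{-2(|\alpha|+d)}$ for $|\alpha|\le n$. Let $\widetilde\Omega_\varphi=\{x\in\Omega: d(x,\partial\Omega)>2R_\varphi,\ \|x\|<1/R_\varphi\}$ and $C_{\Omega,\varphi}(x)=\int_{\widetilde\Omega_\varphi}\varphi(x-t)\,dt$. For $f$ locally integrable on $\Omega$,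 $(f\circledast\varphi)(x)=\int f(t)C_{\Omega,\varphi}(t)\varphi(x-t)\,dt$ for $x\in\Omega$. *)

theory Defs
  imports "HOL-Analysis.Analysis"
begin

text \<open>Points of R^d are vectors real^'n, where the finite index type 'n has d = CARD('n)
  elements; a linear order on 'n only fixes the order in which partial derivatives
  are applied (irrelevant for smooth functions).\<close>

definition pdiff :: "'n::finite \<Rightarrow> (real^'n \<Rightarrow> complex) \<Rightarrow> (real^'n \<Rightarrow> complex)" where
  "pdiff i g = (\<lambda>x. vector_derivative (\<lambda>t. g (x + t *\<^sub>R axis i 1)) (at 0))"

definition pdiffs :: "'n::finite list \<Rightarrow> (real^'n \<Rightarrow> complex) \<Rightarrow> (real^'n \<Rightarrow> complex)" where
  "pdiffs l g = foldr pdiff l g"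

definition Dalpha :: "('n::{finite,linorder} \<Rightarrow> nat) \<Rightarrow> ((real,'n) vec \<Rightarrow> complex) \<Rightarrow> ((real,'n) vec \<Rightarrow> complex)" where
  "Dalpha \<alpha> g = foldr (\<lambda>i h. (pdiff i ^^ \<alpha> i) h) (sorted_list_of_set (UNIV :: 'n set)) g"

definition mi_abs :: "('n::finite \<Rightarrow> nat) \<Rightarrow> nat" where
  "mi_abs \<alpha> = (\<Sum>i\<in>UNIV. \<alpha> i)"

definition mono_pow :: "real^'n::finite \<Rightarrow> ('n \<Rightarrow> nat) \<Rightarrow> real" where
  "mono_pow x \<alpha> = (\<Prod>i\<in>UNIV. (x $ i) ^ \<alpha> i)"

definition smooth_on :: "(real^'n::finite) set \<Rightarrow> (real^'n \<Rightarrow> complex) \<Rightarrow> bool" where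
  "smooth_on \<Omega> g \<longleftrightarrow>
     (\<forall>l. continuous_on \<Omega> (pdiffs l g)) \<and>
     (\<forall>l i. \<forall>x\<in>\<Omega>. ((\<lambda>t. pdiffs l g (x + t *\<^sub>R axis i 1)) has_vector_derivative
                       pdiff i (pdiffs l g) x) (at 0))"

definition D0 :: "(real^'n::finite \<Rightarrow> complex) set" where
  "D0 = {\<phi>. smooth_on UNIV \<phi> \<and> bounded {x. \<phi> x \<noteq> 0}}"

definition Rphi :: "(real^'n::finite \<Rightarrow> complex) \<Rightarrow> real" where
  "Rphi \<phi> = (if \<phi> = (\<lambda>_. 0) then 1 else Sup {norm x | x. \<phi> x \<noteq> 0})"

definition Dn :: "nat \<Rightarrow> (real^'n::{finite,linorder} \<Rightarrow> complex) set" where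
  "Dn n = (if n = 0 then D0 else
     {\<phi> \<in> D0.
        (\<forall>x. Im (\<phi> x) = 0) \<and>
        (\<forall>x. \<phi> (- x) = \<phi> x) \<and>
        Rphi \<phi> \<le> 1 / real n \<and>
        integral\<^sup>L lborel \<phi> = 1 \<and>
        (\<forall>\<alpha>. 1 \<le> mi_abs \<alpha> \<and> mi_abs \<alpha> \<le> n \<longrightarrow>
              integral\<^sup>L lborel (\<lambda>x. complex_of_real (mono_pow x \<alpha>) * \<phi> x) = 0) \<and>
        integral\<^sup>L lborel (\<lambda>x. norm (\<phi> x)) \<le> 1 + 1 / real n \<and>
        (\<forall>\<alpha>. mi_abs \<alpha> \<le> n \<longrightarrow>
              (\<forall>x. norm (Dalpha \<alpha> \<phi> x) \<le> Rphi \<phi> powr (- 2 * real (mi_abs \<alpha> + CARD('n)))))})"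

text \<open>\<Omega>~_\<phi>; d(x,\<partial>\<Omega>) is +\<infinity> when \<partial>\<Omega> is empty.\<close>
definition Omega_tilde :: "(real^'n::finite) set \<Rightarrow> (real^'n \<Rightarrow> complex) \<Rightarrow> (real^'n) set" where
  "Omega_tilde \<Omega> \<phi> = {x \<in> \<Omega>. (frontier \<Omega> = {} \<or> infdist x (frontier \<Omega>) > 2 * Rphi \<phi>)
                              \<and> norm x < 1 / Rphi \<phi>}"

definition C_Omega :: "(real^'n::finite) set \<Rightarrow> (real^'n \<Rightarrow> complex) \<Rightarrow> real^'n \<Rightarrow> complex" where
  "C_Omega \<Omega> \<phi> x = (LINT t : Omega_tilde \<Omega> \<phi> | lborel. \<phi> (x - t))"

definition conv_Omega :: "(real^'n::finite) set \<Rightarrow> (real^'n \<Rightarrow> complex) \<Rightarrow> (real^'n \<Rightarrow> complex) \<Rightarrow> real^'n \<Rightarrow> complex" where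
  "conv_Omega \<Omega> f \<phi> x = (LINT t : \<Omega> | lborel. f t * C_Omega \<Omega> \<phi> t * \<phi> (x - t))"

end

theory Submission
  imports Defs
begin

lemma pdiffs_Nil[simp]: "pdiffs [] g = g" by (simp add: pdiffs_def)
lemma pdiffs_Cons[simp]: "pdiffs (i#l) g = pdiff i (pdiffs l g)" by (simp add: pdiffs_def)
lemma pdiffs_append: "pdiffs (l1 @ l2) g = pdiffs l1 (pdiffs l2 g)" by (simp add: pdiffs_def)

lemma pdiff_pow: "(pdiff i ^^ k) h = pdiffs (replicate k i) h"
  by (induct k) simp_all

lemma Dalpha_pdiffs:
  "Dalpha \<alpha> g = pdiffs (concat (map (\<lambda>i. replicate (\<alpha> i) i) (sorted_list_of_set (UNIV::'n::{finite,linorder} set)))) g"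
proof -
  have "foldr (\<lambda>i h. (pdiff i ^^ \<alpha> i) h) xs g = pdiffs (concat (map (\<lambda>i. replicate (\<alpha> i) i) xs)) g"
    for xs :: "'n list"
    by (induct xs) (simp_all add: pdiff_pow pdiffs_append)
  then show ?thesis unfolding Dalpha_def by simp
qed

lemma smooth_cont: "smooth_on S f \<Longrightarrow> continuous_on S (pdiffs l f)"
  by (simp add: smooth_on_def)

lemma smooth_der: "smooth_on S f \<Longrightarrow> x \<in> S \<Longrightarrow>
   ((\<lambda>t. pdiffs l f (x + t *\<^sub>R axis i 1)) has_vector_derivative pdiffs (i#l) f x) (at 0)"
  by (simp add: smooth_on_def)

lemma partial_shift:
  fixes H :: "real^'n::finite \<Rightarrow> 'b::real_normed_vector"
  assumes "((\<lambda>t. H ((w + t0 *\<^sub>R axis i 1) + t *\<^sub>R axis i 1)) has_vector_derivative D) (at 0)"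
  shows "((\<lambda>t. H (w + t *\<^sub>R axis i 1)) has_vector_derivative D) (at t0)"
proof -
  have 1: "((\<lambda>t. t - t0) has_vector_derivative 1) (at t0)"
    by (auto intro!: derivative_eq_intros)
  have "((\<lambda>t. H ((w + t0 *\<^sub>R axis i 1) + t *\<^sub>R axis i 1)) \<circ> (\<lambda>t. t - t0) has_vector_derivative 1 *\<^sub>R D) (at t0)"
    by (rule vector_diff_chain_at[OF 1]) (simp add: assms)
  moreover have "((\<lambda>t. H ((w + t0 *\<^sub>R axis i 1) + t *\<^sub>R axis i 1)) \<circ> (\<lambda>t. t - t0)) = (\<lambda>t. H (w + t *\<^sub>R axis i 1))"
    by (rule ext) (simp add: algebra_simps)
  ultimately show ?thesis by simp
qed

lemma norm_le_componentwise:
  fixes x y :: "real^'n::finite"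
  assumes "\<And>k. \<bar>x$k\<bar> \<le> \<bar>y$k\<bar>"
  shows "norm x \<le> norm y"
  unfolding norm_vec_def by (rule L2_set_mono) (use assms in auto)

lemma sum_axis_vec: "(\<Sum>i\<in>UNIV. (h$i) *\<^sub>R axis i (1::real)) = (h::real^'n::finite)"
  by (simp add: vec_eq_iff sum_component axis_def if_distrib cong: if_cong)

lemma partials_frechet:
  fixes H :: "real^'n::finite \<Rightarrow> complex"
  assumes S: "open S" and z: "z \<in> S"
    and der: "\<And>i w. w \<in> S \<Longrightarrow> ((\<lambda>t. H (w + t *\<^sub>R axis i 1)) has_vector_derivative D i w) (at 0)"
    and cont: "\<And>i. continuous_on S (D i)"
  shows "(H has_derivative (\<lambda>h. \<Sum>i\<in>UNIV. (h$i) *\<^sub>R D i z)) (at z)"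
  unfolding has_derivative_at_alt
proof (intro conjI allI impI)
  show "bounded_linear (\<lambda>h. \<Sum>i\<in>UNIV. (h$i) *\<^sub>R D i z)"
    by (intro bounded_linear_intros bounded_linear_vec_nth)
  fix e :: real assume e: "e > 0"
  define e' where "e' = e / real CARD('n)"
  have e': "e' > 0" using e by (simp add: e'_def)
  obtain d1 where d1: "d1 > 0" "ball z d1 \<subseteq> S"
    using S z open_contains_ball by blast
  have "\<forall>i\<in>UNIV. \<forall>\<^sub>F w in nhds z. dist (D i w) (D i z) < e'"
  proof
    fix i :: 'n
    have "isCont (D i) z" using continuous_on_interior[OF cont] S z by (simp add: interior_open)
    then show "\<forall>\<^sub>F w in nhds z. dist (D i w) (D i z) < e'"
      using e' unfolding isCont_def by (metis tendstoD tendsto_at_iff_tendsto_nhds)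
  qed
  then have "\<forall>\<^sub>F w in nhds z. \<forall>i\<in>UNIV. dist (D i w) (D i z) < e'"
    by (rule eventually_ball_finite[rotated]) simp
  then obtain d2 where d2: "d2 > 0" "\<And>w. dist w z < d2 \<Longrightarrow> \<forall>i. dist (D i w) (D i z) < e'"
    unfolding eventually_nhds_metric by (auto simp: dist_commute)
  define d where "d = min d1 d2"
  have d: "d > 0" using d1 d2 by (simp add: d_def)
  show "\<exists>d>0. \<forall>y. norm (y - z) < d \<longrightarrow>
      norm (H y - H z - (\<Sum>i\<in>UNIV. (y - z) $ i *\<^sub>R D i z)) \<le> e * norm (y - z)"
  proof (intro exI[of _ d] conjI allI impI d)
    fix y assume y: "norm (y - z) < d"
    define h where "h = y - z"
    define hA where "hA A = (\<Sum>i\<in>A. (h$i) *\<^sub>R axis i (1::real))" for A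
    have hA_comp: "hA A $ k = (if k \<in> A then h$k else 0)" if "finite A" for A k
      using that by (simp add: hA_def sum_component axis_def if_distrib cong: if_cong)
    have inball: "z + (hA A + t *\<^sub>R axis j 1) \<in> ball z d1 \<and> dist (z + (hA A + t *\<^sub>R axis j 1)) z < d2"
      if "j \<notin> A" "\<bar>t\<bar> \<le> \<bar>h$j\<bar>" for A j t
    proof -
      have "norm (hA A + t *\<^sub>R axis j 1) \<le> norm h"
        by (rule norm_le_componentwise) (use that in \<open>auto simp: hA_comp axis_def\<close>)
      moreover have "dist z (z + v) = norm v" "dist (z + v) z = norm v" for v
        by (simp_all add: dist_norm)
      ultimately show ?thesis using y d_def by (auto simp: h_def)
    qed
    have key: "norm (H (z + hA A) - H z - (\<Sum>i\<in>A. (h$i) *\<^sub>R D i z)) \<le> e' * (\<Sum>i\<in>A. \<bar>h$i\<bar>)"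
      if "finite A" for A
      using that
    proof (induction A rule: finite_induct)
      case empty then show ?case by (simp add: hA_def)
    next
      case (insert j A)
      define w where "w = z + hA A"
      define T where "T = closed_segment 0 (h$j)"
      define \<psi> where "\<psi> t = H (w + t *\<^sub>R axis j 1) - t *\<^sub>R D j z" for t
      have Tt: "\<bar>t\<bar> \<le> \<bar>h$j\<bar>" if "t \<in> T" for t
        using that unfolding T_def closed_segment_eq_real_ivl by (auto split: if_splits)
      have "norm (\<psi> (h$j) - \<psi> 0) \<le> e' * norm (h$j - 0)"
      proof (rule differentiable_bound[where f'="\<lambda>t u. u *\<^sub>R (D j (w + t *\<^sub>R axis j 1) - D j z)"])
        show "convex T" by (simp add: T_def)
        show "h$j \<in> T" "0 \<in> T" by (auto simp: T_def)
        fix t assume t: "t \<in> T"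
        have wt: "w + t *\<^sub>R axis j 1 \<in> S" "dist (w + t *\<^sub>R axis j 1) z < d2"
          using inball[OF insert(2) Tt[OF t]] d1 by (auto simp: w_def add.assoc)
        have "((\<lambda>t. H (w + t *\<^sub>R axis j 1)) has_vector_derivative D j (w + t *\<^sub>R axis j 1)) (at t)"
          by (rule partial_shift) (rule der[OF wt(1)])
        then have "(\<psi> has_vector_derivative (D j (w + t *\<^sub>R axis j 1) - D j z)) (at t)"
          unfolding \<psi>_def by (auto intro!: derivative_eq_intros)
        then show "(\<psi> has_derivative (\<lambda>u. u *\<^sub>R (D j (w + t *\<^sub>R axis j 1) - D j z))) (at t within T)"
          by (simp add: has_vector_derivative_def has_derivative_at_withinI)
        show "onorm (\<lambda>u. u *\<^sub>R (D j (w + t *\<^sub>R axis j 1) - D j z)) \<le> e'"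
        proof -
          have "onorm (\<lambda>u::real. u *\<^sub>R (D j (w + t *\<^sub>R axis j 1) - D j z)) = norm (D j (w + t *\<^sub>R axis j 1) - D j z)"
            using onorm_scaleR_left[OF bounded_linear_ident] by (simp add: onorm_id)
          then show ?thesis using d2(2)[OF wt(2)] by (simp add: dist_norm less_imp_le)
        qed
      qed
      moreover have "hA (insert j A) = hA A + (h$j) *\<^sub>R axis j 1"
        using insert by (simp add: hA_def)
      ultimately have 1: "norm (H (z + hA (insert j A)) - H (z + hA A) - (h$j) *\<^sub>R D j z) \<le> e' * \<bar>h$j\<bar>"
        by (simp add: \<psi>_def w_def add.assoc algebra_simps)
      have "norm (H (z + hA (insert j A)) - H z - (\<Sum>i\<in>insert j A. (h$i) *\<^sub>R D i z))
          = norm ((H (z + hA (insert j A)) - H (z + hA A) - (h$j) *\<^sub>R D j z)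
             + (H (z + hA A) - H z - (\<Sum>i\<in>A. (h$i) *\<^sub>R D i z)))"
        using insert by (simp add: algebra_simps)
      also have "\<dots> \<le> e' * \<bar>h$j\<bar> + e' * (\<Sum>i\<in>A. \<bar>h$i\<bar>)"
        by (rule order_trans[OF norm_triangle_ineq add_mono[OF 1 insert(3)]])
      finally show ?case using insert by (simp add: distrib_left)
    qed
    have "hA UNIV = h" by (simp add: hA_def sum_axis_vec)
    with key[of UNIV] have "norm (H y - H z - (\<Sum>i\<in>UNIV. (h$i) *\<^sub>R D i z)) \<le> e' * (\<Sum>i\<in>UNIV. \<bar>h$i\<bar>)"
      by (simp add: h_def)
    also have "\<dots> \<le> e' * (real CARD('n) * norm h)"
    proof -
      have "(\<Sum>i\<in>UNIV. \<bar>h$i\<bar>) \<le> (\<Sum>i\<in>(UNIV::'n set). norm h)"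
        by (rule sum_mono) (rule component_le_norm_cart)
      then show ?thesis using e' by (intro mult_left_mono) auto
    qed
    also have "\<dots> = e * norm h" by (simp add: e'_def)
    finally show "norm (H y - H z - (\<Sum>i\<in>UNIV. (y - z) $ i *\<^sub>R D i z)) \<le> e * norm (y - z)"
      by (simp add: h_def)
  qed
qed

lemma line_deriv:
  fixes f :: "real^'n::finite \<Rightarrow> complex"
  assumes sm: "smooth_on \<Omega> f" and op: "open \<Omega>" and xt: "x + t *\<^sub>R v \<in> \<Omega>"
  shows "((\<lambda>t. pdiffs l f (x + t *\<^sub>R v)) has_vector_derivative
          (\<Sum>i\<in>UNIV. v$i *\<^sub>R pdiffs (i#l) f (x + t *\<^sub>R v))) (at t within T)"
proof -
  have H: "(pdiffs l f has_derivative (\<lambda>h. \<Sum>i\<in>UNIV. (h$i) *\<^sub>R pdiffs (i#l) f (x + t *\<^sub>R v))) (at (x + t *\<^sub>R v))"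
    apply (rule partials_frechet[OF op xt])
    using smooth_der[OF sm] smooth_cont[OF sm, of "_ # l"] by auto
  have L: "((\<lambda>t. x + t *\<^sub>R v) has_derivative (\<lambda>u. u *\<^sub>R v)) (at t within T)"
    by (auto intro!: derivative_eq_intros)
  have "((\<lambda>t. pdiffs l f (x + t *\<^sub>R v)) has_derivative
      (\<lambda>u. \<Sum>i\<in>UNIV. ((u *\<^sub>R v)$i) *\<^sub>R pdiffs (i#l) f (x + t *\<^sub>R v))) (at t within T)"
    using has_derivative_compose[OF L H] by simp
  then show ?thesis
    unfolding has_vector_derivative_def
    by (simp add: scaleR_sum_right)
qed

definition LL :: "nat \<Rightarrow> 'n list set" where "LL k = {l. set l \<subseteq> UNIV \<and> length l = k}"

lemma finite_LL[simp]: "finite (LL k :: 'n::finite list set)"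
  unfolding LL_def by (rule finite_lists_length_eq) simp

lemma card_LL: "card (LL k :: 'n::finite list set) = CARD('n) ^ k"
  unfolding LL_def by (rule card_lists_length_eq) simp

lemma LL_0[simp]: "LL 0 = {[]}" by (auto simp: LL_def)

lemma sum_LL_Suc:
  "(\<Sum>l\<in>LL (Suc k). g l) = (\<Sum>l\<in>LL k. \<Sum>i\<in>(UNIV::'n::finite set). g (i#l))"
proof -
  have "LL (Suc k) = (\<lambda>(xs, n). n#xs) ` (LL k \<times> (UNIV::'n set))"
    unfolding LL_def by (rule lists_length_Suc_eq)
  moreover have "inj_on (\<lambda>(xs, n). n#xs) (LL k \<times> (UNIV::'n set))"
    by (auto simp: inj_on_def)
  ultimately show ?thesis
    by (simp add: sum.reindex sum.cartesian_product split_def)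
qed

definition cf :: "real^'n \<Rightarrow> 'n list \<Rightarrow> real" where
  "cf v l = prod_list (map (\<lambda>j. v$j) l)"

lemma cf_Cons[simp]: "cf v (i#l) = v$i * cf v l" by (simp add: cf_def)
lemma cf_Nil[simp]: "cf v [] = 1" by (simp add: cf_def)

lemma cf_bound: "\<bar>cf v l\<bar> \<le> norm v ^ length l"
  by (induct l) (auto simp: abs_mult intro!: mult_mono component_le_norm_cart)

definition Dk :: "(real^'n::finite \<Rightarrow> complex) \<Rightarrow> 'n list \<Rightarrow> real^'n \<Rightarrow> real^'n \<Rightarrow> nat \<Rightarrow> real \<Rightarrow> complex" where
  "Dk f l0 x v k t = (\<Sum>l\<in>LL k. cf v l *\<^sub>R pdiffs (l @ l0) f (x + t *\<^sub>R v))"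

lemma Dk_0: "Dk f l0 x v 0 t = pdiffs l0 f (x + t *\<^sub>R v)"
  by (simp add: Dk_def)

lemma Dk_deriv:
  fixes f :: "real^'n::finite \<Rightarrow> complex"
  assumes sm: "smooth_on \<Omega> f" and op: "open \<Omega>" and xt: "x + t *\<^sub>R v \<in> \<Omega>"
  shows "(Dk f l0 x v k has_vector_derivative Dk f l0 x v (Suc k) t) (at t within T)"
proof -
  have "(Dk f l0 x v k has_vector_derivative
     (\<Sum>l\<in>LL k. cf v l *\<^sub>R (\<Sum>i\<in>UNIV. v$i *\<^sub>R pdiffs (i#(l @ l0)) f (x + t *\<^sub>R v)))) (at t within T)"
    unfolding Dk_def
    by (intro has_vector_derivative_sum bounded_linear.has_vector_derivative[OF bounded_linear_scaleR_right]
        line_deriv[OF sm op xt])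
  moreover have "(\<Sum>l\<in>LL k. cf v l *\<^sub>R (\<Sum>i\<in>UNIV. v$i *\<^sub>R pdiffs (i#(l @ l0)) f (x + t *\<^sub>R v)))
      = Dk f l0 x v (Suc k) t"
    unfolding Dk_def sum_LL_Suc by (simp add: scaleR_sum_right mult.commute)
  ultimately show ?thesis by simp
qed

lemma taylor_est:
  fixes f :: "real^'n::finite \<Rightarrow> complex"
  assumes sm: "smooth_on \<Omega> f" and op: "open \<Omega>"
    and seg: "\<And>t. t \<in> {0..1} \<Longrightarrow> x + t *\<^sub>R v \<in> \<Omega>"
    and B0: "0 \<le> B"
    and B: "\<And>l t. l \<in> LL (Suc p) \<Longrightarrow> t \<in> {0..1} \<Longrightarrow> norm (pdiffs (l @ l0) f (x + t *\<^sub>R v)) \<le> B"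
  shows "norm (pdiffs l0 f (x + v) - (\<Sum>k<Suc p. (1 / fact k) *\<^sub>R Dk f l0 x v k 0))
          \<le> real CARD('n)^(Suc p) * B * norm v ^ Suc p"
proof -
  let ?g = "\<lambda>t. pdiffs l0 f (x + t *\<^sub>R v)"
  have Df0: "Dk f l0 x v 0 = ?g" by (rule ext) (simp add: Dk_0)
  have "((\<lambda>t. ((1 - t) ^ (Suc p - 1) / fact (Suc p - 1)) *\<^sub>R Dk f l0 x v (Suc p) t) has_integral
      ?g 1 - (\<Sum>i<Suc p. ((1 - 0) ^ i / fact i) *\<^sub>R Dk f l0 x v i 0)) {0..1}"
  proof (rule Taylor_has_integral[where Df="Dk f l0 x v"])
    show "Dk f l0 x v 0 = ?g" by (rule Df0)
    fix m t assume "m < Suc p" "0 \<le> t" "t \<le> (1::real)"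
    then have "x + t *\<^sub>R v \<in> \<Omega>" using seg by simp
    then show "(Dk f l0 x v m has_vector_derivative Dk f l0 x v (Suc m) t) (at t within {0..1})"
      by (rule Dk_deriv[OF sm op])
  next show "0 < Suc p" by simp
  next show "0 \<le> (1::real)" by simp
  qed
  then have I: "((\<lambda>t. ((1 - t) ^ p / fact p) *\<^sub>R Dk f l0 x v (Suc p) t) has_integral
      pdiffs l0 f (x + v) - (\<Sum>k<Suc p. (1 / fact k) *\<^sub>R Dk f l0 x v k 0)) (cbox 0 1)"
    by (simp add: cbox_interval)
  have bd: "norm (((1 - t) ^ p / fact p) *\<^sub>R Dk f l0 x v (Suc p) t) \<le> real CARD('n)^(Suc p) * B * norm v ^ Suc p"
    if t: "t \<in> cbox 0 1" for t
  proof -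
    have t01: "t \<in> {0..1}" using t by (simp add: cbox_interval)
    have c: "\<bar>(1 - t) ^ p / fact p\<bar> \<le> 1"
    proof -
      have t1: "0 \<le> 1 - t" "1 - t \<le> 1" using t01 by auto
      have p0: "0 \<le> (1 - t) ^ p" using t1 by simp
      have p1: "(1 - t) ^ p \<le> 1" using t1 by (rule power_le_one)
      have f1: "(1::real) \<le> fact p" by simp
      have "(1 - t) ^ p / fact p \<le> (1 - t) ^ p / 1"
        by (rule divide_left_mono[OF f1 p0]) simp
      moreover have "0 \<le> (1 - t) ^ p / fact p" using p0 by simp
      then have "\<bar>(1 - t) ^ p / fact p\<bar> = (1 - t) ^ p / fact p" by (rule abs_of_nonneg)
      ultimately show ?thesis using p1 by linarith
    qed
    have "norm (Dk f l0 x v (Suc p) t) \<le> (\<Sum>l\<in>LL (Suc p). norm (cf v l *\<^sub>R pdiffs (l @ l0) f (x + t *\<^sub>R v)))"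
      unfolding Dk_def by (rule norm_sum)
    also have "\<dots> \<le> (\<Sum>l\<in>(LL (Suc p) :: 'n list set). norm v ^ Suc p * B)"
    proof (intro sum_mono)
      fix l :: "'n list" assume l: "l \<in> LL (Suc p)"
      then have "length l = Suc p" by (simp add: LL_def)
      then have 1: "\<bar>cf v l\<bar> \<le> norm v ^ Suc p" using cf_bound[of v l] by simp
      have 2: "norm (pdiffs (l @ l0) f (x + t *\<^sub>R v)) \<le> B" by (rule B[OF l t01])
      show "norm (cf v l *\<^sub>R pdiffs (l @ l0) f (x + t *\<^sub>R v)) \<le> norm v ^ Suc p * B"
        unfolding norm_scaleR by (rule mult_mono[OF 1 2]) simp_all
    qed
    also have "\<dots> = real CARD('n)^(Suc p) * B * norm v ^ Suc p"
      by (simp add: card_LL)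
    finally have "norm (Dk f l0 x v (Suc p) t) \<le> real CARD('n)^(Suc p) * B * norm v ^ Suc p" .
    moreover have "\<bar>(1 - t) ^ p / fact p\<bar> * norm (Dk f l0 x v (Suc p) t) \<le> 1 * norm (Dk f l0 x v (Suc p) t)"
      by (rule mult_right_mono[OF c]) simp
    ultimately show ?thesis by (simp only: norm_scaleR)
  qed
  have "norm (pdiffs l0 f (x + v) - (\<Sum>k<Suc p. (1 / fact k) *\<^sub>R Dk f l0 x v k 0))
      \<le> real CARD('n)^(Suc p) * B * norm v ^ Suc p * Henstock_Kurzweil_Integration.content (cbox (0::real) 1)"
    by (rule has_integral_bound[OF _ I bd]) (use B0 in auto)
  then show ?thesis by simp
qed

lemma lint_box:
  fixes g :: "real^'n::finite \<Rightarrow> 'b::euclidean_space"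
  assumes "continuous_on (cbox a b) g"
  shows "integral\<^sup>L lborel (\<lambda>s. indicator (cbox a b) s *\<^sub>R g s) = integral (cbox a b) g"
proof -
  have int: "integrable lborel (\<lambda>s. indicator (cbox a b) s *\<^sub>R g s)"
    by (rule borel_integrable_compact) (auto simp: assms)
  have eq: "(\<lambda>s. indicator (cbox a b) s *\<^sub>R g s) = (\<lambda>s. if s \<in> cbox a b then g s else 0)"
    by (auto simp: indicator_def)
  have "integral\<^sup>L lborel (\<lambda>s. indicator (cbox a b) s *\<^sub>R g s) = integral UNIV (\<lambda>s. indicator (cbox a b) s *\<^sub>R g s)"
    using integral_lborel[OF int] by simp
  also have "\<dots> = integral UNIV (\<lambda>s. if s \<in> cbox a b then g s else 0)"
    by (simp only: eq)
  also have "\<dots> = integral (cbox a b) g"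
    by (rule integral_restrict_UNIV)
  finally show ?thesis .
qed

lemma lint_supp:
  fixes g :: "real^'n::finite \<Rightarrow> 'b::euclidean_space"
  assumes "continuous_on (cbox a b) g" "\<And>s. s \<notin> cbox a b \<Longrightarrow> g s = 0"
  shows "integral\<^sup>L lborel g = integral (cbox a b) g"
proof -
  have "g = (\<lambda>s. indicator (cbox a b) s *\<^sub>R g s)"
    using assms(2) by (auto simp: indicator_def fun_eq_iff)
  then have "integral\<^sup>L lborel g = integral\<^sup>L lborel (\<lambda>s. indicator (cbox a b) s *\<^sub>R g s)" by metis
  then show ?thesis using lint_box[OF assms(1)] by simp
qed

lemma cov:
  fixes g :: "real^'n::finite \<Rightarrow> 'b::banach"
  assumes "g integrable_on cbox (y - c) (y + c)"
  shows "integral (cbox (y - c) (y + c)) g = integral (cbox (-c) c) (\<lambda>s. g (y - s))"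
proof -
  obtain i where i: "(g has_integral i) (cbox (y - c) (y + c))" using assms by blast
  have "((\<lambda>x. g (1 *\<^sub>R x + y)) has_integral i /\<^sub>R 1 ^ DIM(real^'n))
      (cbox ((y - c - y) /\<^sub>R 1) ((y + c - y) /\<^sub>R 1))"
    by (rule has_integral_affinity'[OF i]) simp
  then have "((\<lambda>x. g (x + y)) has_integral i) (cbox (-c) c)" by simp
  then have "((\<lambda>x. (\<lambda>x. g (x + y)) (-x)) has_integral i) (cbox (-c) (- (-c)))"
    by (subst has_integral_reflect) simp
  then have "((\<lambda>s. g (y - s)) has_integral i) (cbox (-c) c)" by (simp add: algebra_simps)
  then show ?thesis using i by (simp add: integral_unique)
qed

lemma pdiff_local:
  assumes V: "open V" "y \<in> V" and eq: "\<And>z. z \<in> V \<Longrightarrow> g z = h z"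
  shows "pdiff i g y = pdiff i h y"
proof -
  let ?S = "{t::real. y + t *\<^sub>R axis i 1 \<in> V}"
  have S: "open ?S"
    by (rule open_vimage[OF V(1), of "\<lambda>t. y + t *\<^sub>R axis i 1", unfolded vimage_def])
       (intro continuous_intros)
  have 0: "0 \<in> ?S" using V by simp
  have "((\<lambda>t. g (y + t *\<^sub>R axis i 1)) has_vector_derivative D) (at 0) \<longleftrightarrow>
        ((\<lambda>t. h (y + t *\<^sub>R axis i 1)) has_vector_derivative D) (at 0)" for D
    using has_vector_derivative_transform_within_open[OF _ S 0, of "\<lambda>t. g (y + t *\<^sub>R axis i 1)" D "\<lambda>t. h (y + t *\<^sub>R axis i 1)"]
      has_vector_derivative_transform_within_open[OF _ S 0, of "\<lambda>t. h (y + t *\<^sub>R axis i 1)" D "\<lambda>t. g (y + t *\<^sub>R axis i 1)"]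
      eq by auto
  then show ?thesis unfolding pdiff_def vector_derivative_def by simp
qed

lemma F_deriv:
  fixes f \<phi> :: "real^'n::finite \<Rightarrow> complex"
  assumes op: "open \<Omega>" and sm: "smooth_on \<Omega> f" and c\<phi>: "continuous_on UNIV \<phi>"
    and \<eta>: "\<eta> > 0" and dom: "\<And>\<tau> s. \<bar>\<tau>\<bar> < \<eta> \<Longrightarrow> s \<in> cbox a b \<Longrightarrow> y + \<tau> *\<^sub>R axis i 1 - s \<in> \<Omega>"
  shows "pdiff i (\<lambda>y. integral (cbox a b) (\<lambda>s. pdiffs l f (y - s) * \<phi> s)) y
       = integral (cbox a b) (\<lambda>s. pdiffs (i#l) f (y - s) * \<phi> s)"
proof -
  let ?e = "axis i (1::real) :: real^'n"
  define U where "U = ball (0::real) \<eta>"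
  have U: "open U" "convex U" "0 \<in> U" using \<eta> by (auto simp: U_def)
  have dom': "y + \<tau> *\<^sub>R ?e - s \<in> \<Omega>" if "\<tau> \<in> U" "s \<in> cbox a b" for \<tau> s
    using dom that by (auto simp: U_def)
  have "((\<lambda>\<tau>. integral (cbox a b) (\<lambda>s. pdiffs l f (y + \<tau> *\<^sub>R ?e - s) * \<phi> s)) has_vector_derivative
        integral (cbox a b) (\<lambda>s. pdiffs (i#l) f (y + 0 *\<^sub>R ?e - s) * \<phi> s)) (at 0 within U)"
  proof (rule leibniz_rule_vector_derivative[where fx = "\<lambda>\<tau> s. pdiffs (i#l) f (y + \<tau> *\<^sub>R ?e - s) * \<phi> s"])
    fix \<tau> s assume \<tau>: "\<tau> \<in> U" and s: "s \<in> cbox a b"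
    have w: "(y - s) + \<tau> *\<^sub>R ?e \<in> \<Omega>" using dom'[OF \<tau> s] by (simp add: algebra_simps)
    have "((\<lambda>t. pdiffs l f ((y - s) + t *\<^sub>R ?e)) has_vector_derivative pdiffs (i#l) f ((y - s) + \<tau> *\<^sub>R ?e)) (at \<tau>)"
      by (rule partial_shift) (rule smooth_der[OF sm w])
    then have "((\<lambda>t. pdiffs l f ((y - s) + t *\<^sub>R ?e) * \<phi> s) has_vector_derivative pdiffs (i#l) f ((y - s) + \<tau> *\<^sub>R ?e) * \<phi> s) (at \<tau>)"
      by (rule has_vector_derivative_mult_left)
    then have "((\<lambda>t. pdiffs l f (y + t *\<^sub>R ?e - s) * \<phi> s) has_vector_derivative pdiffs (i#l) f (y + \<tau> *\<^sub>R ?e - s) * \<phi> s) (at \<tau>)"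
      by (simp add: algebra_simps)
    then show "((\<lambda>\<tau>. pdiffs l f (y + \<tau> *\<^sub>R ?e - s) * \<phi> s) has_vector_derivative pdiffs (i#l) f (y + \<tau> *\<^sub>R ?e - s) * \<phi> s) (at \<tau> within U)"
      by (rule has_vector_derivative_at_within)
  next
    fix \<tau> assume \<tau>: "\<tau> \<in> U"
    have "continuous_on (cbox a b) (\<lambda>s. pdiffs l f (y + \<tau> *\<^sub>R ?e - s))"
      by (rule continuous_on_compose2[OF smooth_cont[OF sm], where f = "\<lambda>s. y + \<tau> *\<^sub>R ?e - s"])
         (use dom'[OF \<tau>] in \<open>auto intro!: continuous_intros\<close>)
    then have "continuous_on (cbox a b) (\<lambda>s. pdiffs l f (y + \<tau> *\<^sub>R ?e - s) * \<phi> s)"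
      by (intro continuous_intros continuous_on_subset[OF c\<phi>]) auto
    then show "(\<lambda>s. pdiffs l f (y + \<tau> *\<^sub>R ?e - s) * \<phi> s) integrable_on cbox a b"
      by (rule integrable_continuous)
  next
    have "continuous_on (U \<times> cbox a b) (\<lambda>p. pdiffs (i#l) f (y + fst p *\<^sub>R ?e - snd p))"
      by (rule continuous_on_compose2[OF smooth_cont[OF sm], where f = "\<lambda>p. y + fst p *\<^sub>R ?e - snd p"])
         (use dom' in \<open>auto intro!: continuous_intros\<close>)
    moreover have "continuous_on (U \<times> cbox a b) (\<lambda>p. \<phi> (snd p))"
      by (rule continuous_on_compose2[OF c\<phi>]) (auto intro!: continuous_intros)
    ultimately have "continuous_on (U \<times> cbox a b) (\<lambda>p. pdiffs (i#l) f (y + fst p *\<^sub>R ?e - snd p) * \<phi> (snd p))"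
      by (rule continuous_on_mult)
    then show "continuous_on (U \<times> cbox a b) (\<lambda>(\<tau>, s). pdiffs (i#l) f (y + \<tau> *\<^sub>R ?e - s) * \<phi> s)"
      by (simp add: split_def)
  qed (use U in auto)
  then have "((\<lambda>\<tau>. integral (cbox a b) (\<lambda>s. pdiffs l f (y + \<tau> *\<^sub>R ?e - s) * \<phi> s)) has_vector_derivative
        integral (cbox a b) (\<lambda>s. pdiffs (i#l) f (y - s) * \<phi> s)) (at 0)"
    using at_within_open[OF U(3,1)] by simp
  then show ?thesis
    unfolding pdiff_def by (rule vector_derivative_at)
qed

lemma box_sym_mem:
  fixes u :: "real^'n::finite"
  assumes "c = (\<chi> i. R)" "norm u \<le> R"
  shows "u \<in> cbox (-c) c"
  proof -
  have "- R \<le> u$i \<and> u$i \<le> R" for i using component_le_norm_cart[of u i] assms(2) by linarith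
  then show ?thesis using assms(1) by (simp add: mem_box_cart)
qed

lemma box_shift_mem:
  fixes t y c :: "real^'n::finite"
  shows "t \<in> cbox (y - c) (y + c) \<longleftrightarrow> y - t \<in> cbox (-c) c"
  by (auto simp: mem_box_cart algebra_simps)

lemma C_one:
  fixes \<phi> :: "real^'n::finite \<Rightarrow> complex"
  assumes c\<phi>: "continuous_on UNIV \<phi>"
    and supp: "\<And>s. \<phi> s \<noteq> 0 \<Longrightarrow> norm s \<le> R"
    and c: "c = (\<chi> i. R)"
    and int1: "integral (cbox (-c) c) \<phi> = 1"
    and tild: "cball y (2*R) \<subseteq> Omega_tilde \<Omega> \<phi>"
    and t: "norm (y - t) \<le> R"
  shows "C_Omega \<Omega> \<phi> t = 1"
proof -
  have eq: "indicator (Omega_tilde \<Omega> \<phi>) s *\<^sub>R \<phi> (t - s) = indicator (cbox (t - c) (t + c)) s *\<^sub>R \<phi> (t - s)" for s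
  proof (cases "\<phi> (t - s) = 0")
    case False
    then have ts: "norm (t - s) \<le> R" using supp by blast
    then have "dist y s \<le> 2 * R" using t norm_triangle_ineq[of "y - t" "t - s"] by (simp add: dist_norm)
    then have "s \<in> Omega_tilde \<Omega> \<phi>" using tild by auto
    moreover have "s \<in> cbox (t - c) (t + c)" using box_sym_mem[OF c ts] box_shift_mem by blast
    ultimately show ?thesis by simp
  qed simp
  have cont: "continuous_on A (\<lambda>s. \<phi> (t - s))" for A
    by (rule continuous_on_compose2[OF c\<phi>]) (auto intro!: continuous_intros)
  have "C_Omega \<Omega> \<phi> t = integral\<^sup>L lborel (\<lambda>s. indicator (cbox (t - c) (t + c)) s *\<^sub>R \<phi> (t - s))"
    unfolding C_Omega_def set_lebesgue_integral_def eq ..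
  also have "\<dots> = integral (cbox (t - c) (t + c)) (\<lambda>s. \<phi> (t - s))"
    by (rule lint_box[OF cont])
  also have "\<dots> = integral (cbox (-c) c) (\<lambda>u. \<phi> (t - (t - u)))"
    by (rule cov) (rule integrable_continuous[OF cont])
  also have "\<dots> = 1" using int1 by simp
  finally show ?thesis .
qed

lemma conv_local:
  fixes f \<phi> :: "real^'n::finite \<Rightarrow> complex"
  assumes sm: "smooth_on \<Omega> f" and c\<phi>: "continuous_on UNIV \<phi>"
    and supp: "\<And>s. \<phi> s \<noteq> 0 \<Longrightarrow> norm s \<le> R"
    and c: "c = (\<chi> i. R)"
    and int1: "integral (cbox (-c) c) \<phi> = 1"
    and ybox: "cbox (y - c) (y + c) \<subseteq> \<Omega>"
    and tild: "cball y (2*R) \<subseteq> Omega_tilde \<Omega> \<phi>"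
  shows "conv_Omega \<Omega> f \<phi> y = integral (cbox (-c) c) (\<lambda>s. f (y - s) * \<phi> s)"
proof -
  have eq: "indicator \<Omega> t *\<^sub>R (f t * C_Omega \<Omega> \<phi> t * \<phi> (y - t))
      = indicator (cbox (y - c) (y + c)) t *\<^sub>R (f t * \<phi> (y - t))" for t
  proof (cases "\<phi> (y - t) = 0")
    case False
    then have yt: "norm (y - t) \<le> R" using supp by blast
    have C: "C_Omega \<Omega> \<phi> t = 1" by (rule C_one[OF c\<phi> supp c int1 tild yt])
    have "t \<in> cbox (y - c) (y + c)" using box_sym_mem[OF c yt] box_shift_mem by blast
    with ybox show ?thesis by (auto simp: C)
  qed simp
  have cf: "continuous_on (cbox (y - c) (y + c)) f"
    using smooth_cont[OF sm, of "[]"] ybox by (auto intro: continuous_on_subset)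
  have cont: "continuous_on (cbox (y - c) (y + c)) (\<lambda>t. f t * \<phi> (y - t))"
    by (intro continuous_on_mult cf continuous_on_compose2[OF c\<phi>]) (auto intro!: continuous_intros)
  have "conv_Omega \<Omega> f \<phi> y = integral\<^sup>L lborel (\<lambda>t. indicator (cbox (y - c) (y + c)) t *\<^sub>R (f t * \<phi> (y - t)))"
    unfolding conv_Omega_def set_lebesgue_integral_def eq ..
  also have "\<dots> = integral (cbox (y - c) (y + c)) (\<lambda>t. f t * \<phi> (y - t))"
    by (rule lint_box[OF cont])
  also have "\<dots> = integral (cbox (-c) c) (\<lambda>s. f (y - s) * \<phi> (y - (y - s)))"
    by (rule cov) (rule integrable_continuous[OF cont])
  also have "\<dots> = integral (cbox (-c) c) (\<lambda>s. f (y - s) * \<phi> s)" by simp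
  finally show ?thesis .
qed

lemma cf_neg: "cf (-s) l = (-1) ^ length l * cf s l"
  by (induct l) auto

lemma cf_mono: "cf s l = mono_pow s (count_list l)"
proof (induct l)
  case Nil then show ?case by (simp add: mono_pow_def)
next
  case (Cons a l)
  have "(\<lambda>i. s$i ^ count_list (a#l) i) = (\<lambda>i. (if i = a then s$i else 1) * s$i ^ count_list l i)"
    by (auto simp: fun_eq_iff)
  then have "mono_pow s (count_list (a#l)) = (\<Prod>i\<in>UNIV. (if i = a then s$i else 1) * s$i ^ count_list l i)"
    unfolding mono_pow_def by metis
  also have "\<dots> = (\<Prod>i\<in>UNIV. (if i = a then s$i else 1)) * mono_pow s (count_list l)"
    by (simp only: prod.distrib mono_pow_def)
  also have "(\<Prod>i\<in>UNIV. (if i = a then s$i else 1)) = s$a" by simp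
  finally show ?case using Cons by simp
qed

lemma mi_abs_count: "mi_abs (count_list (l :: 'n::finite list)) = length l"
  unfolding mi_abs_def by (rule sum_count_set) auto

lemma cf_cont: "continuous_on S (\<lambda>s. cf (s::real^'n::finite) l)"
  by (induct l) (auto intro!: continuous_intros)

lemma final_est:
  fixes f \<phi> :: "real^'n::finite \<Rightarrow> complex"
  assumes op: "open \<Omega>" and sm: "smooth_on \<Omega> f"
    and c\<phi>: "continuous_on UNIV \<phi>"
    and Bxn: "\<And>s. s \<in> cbox (-c) c \<Longrightarrow> norm s \<le> \<rho>"
    and seg: "cball x \<rho> \<subseteq> \<Omega>"
    and B0: "0 \<le> B"
    and B: "\<And>l z. l \<in> LL (Suc p) \<Longrightarrow> z \<in> cball x \<rho> \<Longrightarrow> norm (pdiffs (l @ l0) f z) \<le> B"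
    and supp: "\<And>s. \<phi> s \<noteq> 0 \<Longrightarrow> norm s \<le> R"
    and int1: "integral (cbox (-c) c) \<phi> = 1"
    and mom: "\<And>\<beta>. 1 \<le> mi_abs \<beta> \<Longrightarrow> mi_abs \<beta> \<le> p \<Longrightarrow>
        integral (cbox (-c) c) (\<lambda>s. complex_of_real (mono_pow s \<beta>) * \<phi> s) = 0"
    and nrm: "integral (cbox (-c) c) (\<lambda>s. norm (\<phi> s)) \<le> 2"
    and R0: "0 \<le> R" and small: "2 * (real CARD('n)^(Suc p) * B) * R \<le> 1"
  shows "norm (integral (cbox (-c) c) (\<lambda>s. pdiffs l0 f (x - s) * \<phi> s) - pdiffs l0 f x) \<le> R ^ p"
proof -
  define Bx where "Bx = cbox (-c) c"
  define M where "M = real CARD('n)^(Suc p) * B"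
  have M0: "0 \<le> M" using B0 by (simp add: M_def)
  define H where "H = pdiffs l0 f"
  define T where "T s = (\<Sum>k<Suc p. (1 / fact k) *\<^sub>R Dk f l0 x (-s) k 0)" for s
  define Rem where "Rem s = H (x - s) - T s" for s
  have intg: "(\<lambda>s. g s * \<phi> s) integrable_on Bx" if "continuous_on Bx g" for g
    unfolding Bx_def
    by (rule integrable_continuous) (use that in \<open>auto simp: Bx_def intro!: continuous_intros continuous_on_subset[OF c\<phi>]\<close>)
  have seg': "x - s \<in> \<Omega>" if "s \<in> Bx" for s
    using Bxn[of s] that seg by (auto simp: Bx_def dist_norm)
  have contH: "continuous_on Bx (\<lambda>s. H (x - s))"
    unfolding H_def
    by (rule continuous_on_compose2[OF smooth_cont[OF sm]]) (use seg' in \<open>auto intro!: continuous_intros\<close>)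
  have contDk: "continuous_on Bx (\<lambda>s. Dk f l0 x (-s) k 0)" for k
    unfolding Dk_def by (auto intro!: continuous_intros continuous_on_compose2[OF cf_cont])
  have contT: "continuous_on Bx T"
    unfolding T_def by (intro continuous_intros contDk)
  have taylor: "norm (Rem s) \<le> M * norm s ^ Suc p" if s: "s \<in> Bx" for s
  proof -
    have inb: "x + t *\<^sub>R (-s) \<in> cball x \<rho>" if "t \<in> {0..1}" for t
    proof -
      have "norm (t *\<^sub>R s) \<le> norm s" using that by (auto intro: mult_left_le_one_le)
      then show ?thesis using Bxn[of s] s by (auto simp: Bx_def dist_norm)
    qed
    have "norm (pdiffs l0 f (x + -s) - (\<Sum>k<Suc p. (1 / fact k) *\<^sub>R Dk f l0 x (-s) k 0))
          \<le> real CARD('n)^(Suc p) * B * norm (-s) ^ Suc p"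
      by (rule taylor_est[OF sm op _ B0]) (use inb seg B in auto)
    then show ?thesis by (simp add: Rem_def H_def T_def M_def)
  qed
  have "integral Bx (\<lambda>s. H (x - s) * \<phi> s) - H x
      = integral Bx (\<lambda>s. H (x - s) * \<phi> s) - integral Bx (\<lambda>s. H x * \<phi> s)"
    using int1 by (simp add: Bx_def)
  also have "\<dots> = integral Bx (\<lambda>s. Rem s * \<phi> s + (T s - H x) * \<phi> s)"
  proof -
    have "integral Bx (\<lambda>s. H (x - s) * \<phi> s) - integral Bx (\<lambda>s. H x * \<phi> s)
        = integral Bx (\<lambda>s. H (x - s) * \<phi> s - H x * \<phi> s)"
      by (rule integral_diff[symmetric]) (auto intro!: intg contH continuous_intros)
    also have "\<dots> = integral Bx (\<lambda>s. Rem s * \<phi> s + (T s - H x) * \<phi> s)"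
      by (rule arg_cong[where f="integral Bx"]) (auto simp: Rem_def algebra_simps)
    finally show ?thesis .
  qed
  also have "\<dots> = integral Bx (\<lambda>s. Rem s * \<phi> s) + integral Bx (\<lambda>s. (T s - H x) * \<phi> s)"
    by (rule integral_add) (auto intro!: intg contH contT continuous_intros simp: Rem_def)
  also have "integral Bx (\<lambda>s. (T s - H x) * \<phi> s) = 0"
  proof -
    have Dk0: "Dk f l0 x (-s) 0 0 = H x" for s by (simp add: Dk_0 H_def)
    have TH: "T s - H x = (\<Sum>k<p. (1 / fact (Suc k)) *\<^sub>R Dk f l0 x (-s) (Suc k) 0)" for s
      unfolding T_def sum.lessThan_Suc_shift by (simp add: Dk0)
    have zero: "integral Bx (\<lambda>s. Dk f l0 x (-s) (Suc k) 0 * \<phi> s) = 0" if k: "k < p" for k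
    proof -
      have eq: "Dk f l0 x (-s) (Suc k) 0 * \<phi> s = (\<Sum>l\<in>LL (Suc k).
          ((-1) ^ Suc k * pdiffs (l @ l0) f x) * (complex_of_real (mono_pow s (count_list l)) * \<phi> s))" for s
        unfolding Dk_def sum_distrib_right
      proof (rule sum.cong[OF refl])
        fix l :: "'n list" assume l: "l \<in> LL (Suc k)"
        then have len: "length l = Suc k" by (simp add: LL_def)
        show "cf (-s) l *\<^sub>R pdiffs (l @ l0) f (x + 0 *\<^sub>R - s) * \<phi> s =
          ((-1) ^ Suc k * pdiffs (l @ l0) f x) * (complex_of_real (mono_pow s (count_list l)) * \<phi> s)"
          by (simp add: cf_neg len cf_mono[of s] scaleR_conv_of_real)
      qed
      have "integral Bx (\<lambda>s. Dk f l0 x (-s) (Suc k) 0 * \<phi> s) = (\<Sum>l\<in>LL (Suc k).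
          integral Bx (\<lambda>s. ((-1) ^ Suc k * pdiffs (l @ l0) f x) * (complex_of_real (mono_pow s (count_list l)) * \<phi> s)))"
        unfolding eq
      proof (rule integral_sum)
        fix l :: "'n list"
        have "(\<lambda>s. complex_of_real (mono_pow s (count_list l)) * \<phi> s) integrable_on Bx"
          by (rule intg) (auto intro!: continuous_intros simp: mono_pow_def)
        then show "(\<lambda>s. ((-1) ^ Suc k * pdiffs (l @ l0) f x) * (complex_of_real (mono_pow s (count_list l)) * \<phi> s)) integrable_on Bx"
          by (rule integrable_on_mult_right)
      qed simp
      also have "\<dots> = 0"
      proof (rule sum.neutral, rule ballI)
        fix l :: "'n list" assume l: "l \<in> LL (Suc k)"
        then have len: "length l = Suc k" by (simp add: LL_def)
        have "integral Bx (\<lambda>s. complex_of_real (mono_pow s (count_list l)) * \<phi> s) = 0"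
          unfolding Bx_def by (rule mom) (use k in \<open>simp_all add: mi_abs_count len\<close>)
        then show "integral Bx (\<lambda>s. ((-1) ^ Suc k * pdiffs (l @ l0) f x) * (complex_of_real (mono_pow s (count_list l)) * \<phi> s)) = 0"
          by simp
      qed
      finally show ?thesis .
    qed
    have "integral Bx (\<lambda>s. (T s - H x) * \<phi> s) = integral Bx (\<lambda>s. \<Sum>k<p. (1 / fact (Suc k)) *\<^sub>R (Dk f l0 x (-s) (Suc k) 0 * \<phi> s))"
      unfolding TH by (simp add: sum_distrib_right)
    also have "\<dots> = (\<Sum>k<p. integral Bx (\<lambda>s. (1 / fact (Suc k)) *\<^sub>R (Dk f l0 x (-s) (Suc k) 0 * \<phi> s)))"
      by (rule integral_sum) (auto intro!: integrable_cmul intg contDk)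
    also have "\<dots> = 0" using zero by simp
    finally show ?thesis .
  qed
  finally have E: "integral Bx (\<lambda>s. H (x - s) * \<phi> s) - H x = integral Bx (\<lambda>s. Rem s * \<phi> s)" by simp
  have "norm (integral Bx (\<lambda>s. Rem s * \<phi> s)) \<le> integral Bx (\<lambda>s. (M * R ^ Suc p) * norm (\<phi> s))"
  proof (rule integral_norm_bound_integral)
    show "(\<lambda>s. Rem s * \<phi> s) integrable_on Bx"
      by (auto intro!: intg contH contT continuous_intros simp: Rem_def)
    show "(\<lambda>s. (M * R ^ Suc p) * norm (\<phi> s)) integrable_on Bx"
      unfolding Bx_def
      by (rule integrable_continuous) (auto intro!: continuous_intros continuous_on_subset[OF c\<phi>])
    fix s assume s: "s \<in> Bx"
    show "norm (Rem s * \<phi> s) \<le> M * R ^ Suc p * norm (\<phi> s)"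
    proof (cases "\<phi> s = 0")
      case False
      then have "norm s \<le> R" using supp by blast
      then have "M * norm s ^ Suc p \<le> M * R ^ Suc p" using M0 by (intro mult_left_mono power_mono) auto
      then have "norm (Rem s) \<le> M * R ^ Suc p" using taylor[OF s] by linarith
      then show ?thesis unfolding norm_mult by (rule mult_right_mono) simp
    qed simp
  qed
  also have "\<dots> = (M * R ^ Suc p) * integral Bx (\<lambda>s. norm (\<phi> s))"
    by simp
  also have "\<dots> \<le> (M * R ^ Suc p) * 2"
    using nrm M0 R0 by (intro mult_left_mono) (auto simp: Bx_def)
  also have "\<dots> = (2 * M * R) * R ^ p" by (simp add: algebra_simps)
  also have "\<dots> \<le> 1 * R ^ p"
    using small R0 by (intro mult_right_mono) (auto simp: M_def)
  finally show ?thesis using E by (simp add: Bx_def H_def)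
qed

lemma Rphi_facts:
  fixes \<phi> :: "real^'n::finite \<Rightarrow> complex"
  assumes D: "\<phi> \<in> D0" and I: "integral\<^sup>L lborel \<phi> = 1"
  shows "\<And>s. \<phi> s \<noteq> 0 \<Longrightarrow> norm s \<le> Rphi \<phi>" "Rphi \<phi> > 0"
proof -
  have sm: "smooth_on UNIV \<phi>" and bd: "bounded {x. \<phi> x \<noteq> 0}" using D by (auto simp: D0_def)
  have c\<phi>: "continuous_on UNIV \<phi>" using smooth_cont[OF sm, of "[]"] by simp
  have ne: "\<phi> \<noteq> (\<lambda>_. 0)" using I by auto
  then obtain x0 where x0: "\<phi> x0 \<noteq> 0" by auto
  have R: "Rphi \<phi> = Sup {norm x | x. \<phi> x \<noteq> 0}" using ne by (simp add: Rphi_def)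
  obtain a where a: "\<And>x. \<phi> x \<noteq> 0 \<Longrightarrow> norm x \<le> a" using bd unfolding bounded_iff by auto
  have bdd: "bdd_above {norm x | x. \<phi> x \<noteq> 0}" using a by (auto intro!: bdd_aboveI)
  show supp: "norm s \<le> Rphi \<phi>" if "\<phi> s \<noteq> 0" for s
    unfolding R by (rule cSup_upper[OF _ bdd]) (use that in auto)
  have "continuous (at x0) \<phi>" using c\<phi> by (simp add: continuous_on_eq_continuous_at)
  then obtain e where e: "e > 0" "\<And>y. dist x0 y < e \<Longrightarrow> \<phi> y \<noteq> 0"
    using continuous_at_avoid[of x0 \<phi> 0] x0 by auto
  define y where "y = x0 + (e/2) *\<^sub>R axis (undefined::'n) (1::real)"
  have "dist x0 y = e/2" using e by (simp add: y_def dist_norm)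
  then have y: "\<phi> y \<noteq> 0" "x0 \<noteq> y" using e by auto
  then have "\<not> (norm x0 = 0 \<and> norm y = 0)" by auto
  then have "0 < norm x0 + norm y" using norm_ge_zero[of x0] norm_ge_zero[of y] by linarith
  moreover have "norm x0 \<le> Rphi \<phi>" "norm y \<le> Rphi \<phi>" using supp x0 y by auto
  ultimately show "Rphi \<phi> > 0" by linarith
qed

theorem lemma3p5:
  fixes \<Omega> :: "((real, 'n::{finite,linorder}) vec) set" and f :: "(real, 'n) vec \<Rightarrow> complex"
  assumes "open \<Omega>" and "smooth_on \<Omega> f"
  shows "\<forall>K \<alpha> (p::nat). compact K \<and> K \<subseteq> \<Omega> \<and> p \<ge> 1 \<longrightarrow>
           (\<exists>n::nat. \<forall>\<phi> \<in> Dn n. \<forall>x \<in> K.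
              norm (Dalpha \<alpha> (conv_Omega \<Omega> f \<phi>) x - Dalpha \<alpha> f x) \<le> Rphi \<phi> ^ p)"
proof (intro allI impI)
  note op = assms(1) and sm = assms(2)
  fix K and \<alpha> :: "'n \<Rightarrow> nat" and p :: nat
  assume "compact K \<and> K \<subseteq> \<Omega> \<and> p \<ge> 1"
  then have K: "compact K" "K \<subseteq> \<Omega>" "p \<ge> 1" by auto
  obtain \<delta>0 where \<delta>0: "\<delta>0 > 0" "(\<Union>x\<in>K. ball x \<delta>0) \<subseteq> \<Omega>"
    using compact_subset_open_imp_ball_epsilon_subset[OF K(1) op K(2)] by blast
  define \<delta> where "\<delta> = \<delta>0 / 5"
  have \<delta>: "\<delta> > 0" using \<delta>0 by (simp add: \<delta>_def)
  have ball4: "z \<in> \<Omega>" if "x \<in> K" "dist x z \<le> 4 * \<delta>" for x z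
    using that \<delta>0 by (force simp: \<delta>_def)
  obtain A where A: "A > 0" "\<And>x. x \<in> K \<Longrightarrow> norm x \<le> A"
    using compact_imp_bounded[OF K(1)] unfolding bounded_pos by auto
  define l\<alpha> where "l\<alpha> = concat (map (\<lambda>i. replicate (\<alpha> i) i) (sorted_list_of_set (UNIV::'n set)))"
  define K' where "K' = {x + w | x w. x \<in> K \<and> w \<in> cball 0 \<delta>}"
  have K'c: "compact K'" unfolding K'_def by (rule compact_sums[OF K(1) compact_cball])
  have K'\<Omega>: "K' \<subseteq> \<Omega>"
  proof
    fix z assume "z \<in> K'"
    then obtain x w where "z = x + w" "x \<in> K" "norm w \<le> \<delta>" by (auto simp: K'_def)
    then show "z \<in> \<Omega>" using ball4[of x z] \<delta> by (auto simp: dist_norm)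
  qed
  have "\<exists>b. \<forall>z\<in>K'. norm (pdiffs (l @ l\<alpha>) f z) \<le> b" for l
  proof -
    have "compact (pdiffs (l @ l\<alpha>) f ` K')"
      by (rule compact_continuous_image[OF continuous_on_subset[OF smooth_cont[OF sm] K'\<Omega>] K'c])
    then have "bounded (pdiffs (l @ l\<alpha>) f ` K')" by (rule compact_imp_bounded)
    then obtain b where "\<forall>w\<in>pdiffs (l @ l\<alpha>) f ` K'. norm w \<le> b" unfolding bounded_iff by blast
    then show ?thesis by auto
  qed
  then obtain bf where bf: "\<And>l z. z \<in> K' \<Longrightarrow> norm (pdiffs (l @ l\<alpha>) f z) \<le> bf l" by metis
  define B where "B = (\<Sum>l\<in>(LL (Suc p) :: 'n list set). \<bar>bf l\<bar>)"
  have B0: "0 \<le> B" by (simp add: B_def sum_nonneg)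
  have Bb: "norm (pdiffs (l @ l\<alpha>) f z) \<le> B" if "l \<in> LL (Suc p)" "z \<in> K'" for l z
  proof -
    have "bf l \<le> \<bar>bf l\<bar>" by simp
    also have "\<dots> \<le> B" unfolding B_def by (rule member_le_sum) (use that in auto)
    finally show ?thesis using bf[OF that(2), of l] by linarith
  qed
  define M where "M = real CARD('n)^(Suc p) * B"
  have M0: "0 \<le> M" using B0 by (simp add: M_def)
  define d where "d = real CARD('n)"
  have d1: "d \<ge> 1" by (simp add: d_def)
  define n where "n = p + nat \<lceil>2*d/\<delta>\<rceil> + nat \<lceil>A + 3*\<delta>\<rceil> + nat \<lceil>2*M\<rceil> + 1"
  have n0: "n \<noteq> 0" by (simp add: n_def)
  have npos: "real n > 0" using n0 by simp
  have n_ge: "2*d/\<delta> \<le> real n" "A + 3*\<delta> < real n" "2*M \<le> real n" "real p \<le> real n"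
    using real_nat_ceiling_ge[of "2*d/\<delta>"] real_nat_ceiling_ge[of "A + 3*\<delta>"] real_nat_ceiling_ge[of "2*M"]
    by (auto simp: n_def)
  show "\<exists>n. \<forall>\<phi>\<in>Dn n. \<forall>x\<in>K. norm (Dalpha \<alpha> (conv_Omega \<Omega> f \<phi>) x - Dalpha \<alpha> f x) \<le> Rphi \<phi> ^ p"
  proof (intro exI[of _ n] ballI)
    fix \<phi> :: "(real, 'n) vec \<Rightarrow> complex" and x :: "(real, 'n) vec" assume \<phi>: "\<phi> \<in> Dn n" and x: "x \<in> K"
    have \<phi>D0: "\<phi> \<in> D0" and Rn: "Rphi \<phi> \<le> 1 / real n" and I1: "integral\<^sup>L lborel \<phi> = 1"
      and mom: "\<And>\<beta>. 1 \<le> mi_abs \<beta> \<Longrightarrow> mi_abs \<beta> \<le> n \<Longrightarrow>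
              integral\<^sup>L lborel (\<lambda>x. complex_of_real (mono_pow x \<beta>) * \<phi> x) = 0"
      and In: "integral\<^sup>L lborel (\<lambda>x. norm (\<phi> x)) \<le> 1 + 1 / real n"
      using \<phi> n0 by (auto simp: Dn_def)
    define R where "R = Rphi \<phi>"
    have supp: "\<And>s. \<phi> s \<noteq> 0 \<Longrightarrow> norm s \<le> R" and R0: "R > 0"
      using Rphi_facts[OF \<phi>D0 I1] by (auto simp: R_def)
    have sm\<phi>: "smooth_on UNIV \<phi>" using \<phi>D0 by (simp add: D0_def)
    have c\<phi>: "continuous_on UNIV \<phi>" using smooth_cont[OF sm\<phi>, of "[]"] by simp
    have nR: "real n * R \<le> 1" using Rn npos by (simp add: R_def field_simps)
    have dR: "d * R \<le> \<delta> / 2"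
    proof -
      have "(2*d/\<delta>) * R \<le> real n * R" using n_ge(1) R0 by (intro mult_right_mono) auto
      then have "(2*d/\<delta>) * R \<le> 1" using nR by linarith
      then show ?thesis using \<delta> by (simp add: field_simps)
    qed
    have R\<delta>: "R \<le> \<delta> / 2" using dR d1 R0 by (smt (verit) mult_le_cancel_right1)
    have RA: "R * (A + 3*\<delta>) < 1"
    proof -
      have "(A + 3*\<delta>) * R < real n * R" using n_ge(2) R0 by (intro mult_strict_right_mono) auto
      then show ?thesis using nR by (simp add: mult.commute)
    qed
    have RM: "2 * M * R \<le> 1"
    proof -
      have "(2 * M) * R \<le> real n * R" using n_ge(3) R0 by (intro mult_right_mono) auto
      then show ?thesis using nR by linarith
    qed
    have pn: "p \<le> n" using n_ge(4) by simp
    define c where "c = (\<chi> (i::'n). R)"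
    define Bx where "Bx = cbox (-c) c"
    have Bxn: "norm s \<le> d * R" if "s \<in> Bx" for s
    proof -
      have all: "\<forall>i. -R \<le> s$i \<and> s$i \<le> R" using that by (simp add: Bx_def c_def mem_box_cart)
      have "\<bar>s$i\<bar> \<le> R" for i
      proof -
        have "-R \<le> s$i" "s$i \<le> R" using all by auto
        then show ?thesis by (simp add: abs_le_iff)
      qed
      then have "(\<Sum>i\<in>UNIV. \<bar>s$i\<bar>) \<le> (\<Sum>i\<in>(UNIV::'n set). R)" by (intro sum_mono) auto
      then show ?thesis using norm_le_l1_cart[of s] by (simp add: d_def)
    qed
    have out: "\<phi> s = 0" if "s \<notin> Bx" for s
      using box_sym_mem[OF c_def, of s] supp[of s] that by (auto simp: Bx_def)
    have lint: "integral\<^sup>L lborel g = integral Bx g" if "continuous_on Bx g" "\<And>s. \<phi> s = 0 \<Longrightarrow> g s = 0"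
      for g :: "(real, 'n) vec \<Rightarrow> 'b::euclidean_space"
      unfolding Bx_def by (rule lint_supp) (use that out in \<open>auto simp: Bx_def\<close>)
    have cB: "continuous_on Bx \<phi>" using c\<phi> by (rule continuous_on_subset) simp
    have int1: "integral (cbox (-c) c) \<phi> = 1"
      using lint[OF cB] I1 by (simp add: Bx_def)
    have momB: "integral (cbox (-c) c) (\<lambda>s. complex_of_real (mono_pow s \<beta>) * \<phi> s) = 0"
      if "1 \<le> mi_abs \<beta>" "mi_abs \<beta> \<le> p" for \<beta>
    proof -
      have "continuous_on Bx (\<lambda>s. complex_of_real (mono_pow s \<beta>) * \<phi> s)"
        by (auto intro!: continuous_intros cB simp: mono_pow_def)
      then have "integral\<^sup>L lborel (\<lambda>s. complex_of_real (mono_pow s \<beta>) * \<phi> s)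
          = integral Bx (\<lambda>s. complex_of_real (mono_pow s \<beta>) * \<phi> s)"
        by (rule lint) simp
      then show ?thesis using mom[of \<beta>] that pn by (simp add: Bx_def)
    qed
    have nrm: "integral (cbox (-c) c) (\<lambda>s. norm (\<phi> s)) \<le> 2"
    proof -
      have "continuous_on Bx (\<lambda>s. norm (\<phi> s))" by (auto intro!: continuous_intros cB)
      then have "integral\<^sup>L lborel (\<lambda>s. norm (\<phi> s)) = integral Bx (\<lambda>s. norm (\<phi> s))"
        by (rule lint) simp
      moreover have "1 / real n \<le> 1" using n0 by simp
      ultimately show ?thesis using In by (simp add: Bx_def)
    qed
    define V where "V = (\<Union>x\<in>K. ball x \<delta>)"
    have Vo: "open V" by (simp add: V_def open_UN)
    define Fl where "Fl l y = integral (cbox (-c) c) (\<lambda>s. pdiffs l f (y - s) * \<phi> s)" for l y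
    have geo_box: "cbox (y - c) (y + c) \<subseteq> \<Omega>" if "y \<in> V" for y
    proof
      fix t assume t: "t \<in> cbox (y - c) (y + c)"
      obtain x1 where x1: "x1 \<in> K" "dist x1 y < \<delta>" using \<open>y \<in> V\<close> by (auto simp: V_def)
      have "y - t \<in> Bx" using t box_shift_mem by (auto simp: Bx_def)
      then have "dist y t \<le> \<delta>" using Bxn[of "y - t"] dR \<delta> by (simp add: dist_norm)
      then have "dist x1 t \<le> 4 * \<delta>" using x1 dist_triangle[of x1 t y] \<delta> by linarith
      then show "t \<in> \<Omega>" using ball4 x1 by blast
    qed
    have geo_tild: "cball y (2*R) \<subseteq> Omega_tilde \<Omega> \<phi>" if "y \<in> V" for y
    proof
      fix s assume s: "s \<in> cball y (2*R)"
      obtain x1 where x1: "x1 \<in> K" "dist x1 y < \<delta>" using \<open>y \<in> V\<close> by (auto simp: V_def)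
      have ds: "dist x1 s < 2 * \<delta>" using s x1 R\<delta> dist_triangle[of x1 s y] by auto
      then have "dist x1 s \<le> 4 * \<delta>" using \<delta> by linarith
      then have sO: "s \<in> \<Omega>" using ball4 x1 by blast
      have fr: "infdist s (frontier \<Omega>) > 2 * R" if ne: "frontier \<Omega> \<noteq> {}"
      proof -
        have "2 * \<delta> \<le> dist s b" if b: "b \<in> frontier \<Omega>" for b
        proof (rule ccontr)
          assume "\<not> 2 * \<delta> \<le> dist s b"
          then have "dist x1 b \<le> 4 * \<delta>" using ds dist_triangle[of x1 b s] \<delta> by linarith
          then have "b \<in> \<Omega>" using ball4 x1 by blast
          moreover have "b \<notin> \<Omega>" using b op by (simp add: frontier_def interior_open)
          ultimately show False by blast
        qed
        then have "2 * \<delta> \<le> infdist s (frontier \<Omega>)"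
          unfolding infdist_notempty[OF ne] by (intro cINF_greatest ne) auto
        then show ?thesis using R\<delta> \<delta> by linarith
      qed
      have "norm s \<le> A + 2 * \<delta>"
        using A(2)[OF x1(1)] ds norm_triangle_ineq[of x1 "s - x1"] by (simp add: dist_norm norm_minus_commute)
      then have "R * norm s < 1" using RA R0 \<delta>
        by (smt (verit, best) mult_left_mono)
      then have "norm s < 1 / R" using R0 by (simp add: field_simps)
      then show "s \<in> Omega_tilde \<Omega> \<phi>" using sO fr by (auto simp: Omega_tilde_def R_def)
    qed
    have all: "\<forall>y\<in>V. pdiffs l (conv_Omega \<Omega> f \<phi>) y = Fl l y" for l
    proof (induct l)
      case Nil
      show ?case
        using conv_local[OF sm c\<phi> supp c_def int1 geo_box geo_tild] by (simp add: Fl_def)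
    next
      case (Cons i l)
      show ?case
      proof
        fix y assume y: "y \<in> V"
        obtain x1 where x1: "x1 \<in> K" "dist x1 y < \<delta>" using y by (auto simp: V_def)
        have "pdiffs (i#l) (conv_Omega \<Omega> f \<phi>) y = pdiff i (pdiffs l (conv_Omega \<Omega> f \<phi>)) y" by simp
        also have "\<dots> = pdiff i (Fl l) y"
          by (rule pdiff_local[OF Vo y]) (use Cons in auto)
        also have "\<dots> = Fl (i#l) y"
          unfolding Fl_def
        proof (rule F_deriv[OF op sm c\<phi> \<delta>])
          fix \<tau> s assume \<tau>: "\<bar>\<tau>\<bar> < \<delta>" and s: "s \<in> cbox (-c) c"
          have "norm s \<le> \<delta>" using Bxn[of s] s dR \<delta> by (simp add: Bx_def)
          moreover have "norm (\<tau> *\<^sub>R axis i (1::real)) = \<bar>\<tau>\<bar>" by simp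
          ultimately have "dist y (y + \<tau> *\<^sub>R axis i 1 - s) \<le> 2 * \<delta>"
            using \<tau> norm_triangle_ineq4[of "\<tau> *\<^sub>R axis i 1" s] norm_minus_commute[of s "\<tau> *\<^sub>R axis i 1"]
            by (simp add: dist_norm)
          then have "dist x1 (y + \<tau> *\<^sub>R axis i 1 - s) \<le> 4 * \<delta>"
            using x1 dist_triangle[of x1 "y + \<tau> *\<^sub>R axis i 1 - s" y] \<delta> by linarith
          then show "y + \<tau> *\<^sub>R axis i 1 - s \<in> \<Omega>" using ball4 x1 by blast
        qed
        finally show "pdiffs (i#l) (conv_Omega \<Omega> f \<phi>) y = Fl (i#l) y" .
      qed
    qed
    have xV: "x \<in> V" using x \<delta> unfolding V_def by (auto intro!: bexI[of _ x])
    have "Dalpha \<alpha> (conv_Omega \<Omega> f \<phi>) x = Fl l\<alpha> x"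
      using all[of l\<alpha>] xV by (simp add: Dalpha_pdiffs l\<alpha>_def)
    moreover have "Dalpha \<alpha> f x = pdiffs l\<alpha> f x" by (simp add: Dalpha_pdiffs l\<alpha>_def)
    moreover have "norm (Fl l\<alpha> x - pdiffs l\<alpha> f x) \<le> R ^ p"
      unfolding Fl_def
    proof (rule final_est[OF op sm c\<phi> _ _ B0 _ supp int1 momB nrm _ _, where \<rho> = "d * R"])
      show "\<And>s. s \<in> cbox (- c) c \<Longrightarrow> norm s \<le> d * R" using Bxn by (simp add: Bx_def)
      have cx: "cball x (d * R) \<subseteq> K'"
      proof
        fix z assume "z \<in> cball x (d * R)"
        then have "norm (z - x) \<le> \<delta>" using dR \<delta> by (simp add: dist_norm norm_minus_commute)
        then have "z - x \<in> cball 0 \<delta>" by (simp add: dist_norm norm_minus_commute)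
        moreover have "z = x + (z - x)" by simp
        ultimately show "z \<in> K'" unfolding K'_def using x by blast
      qed
      then show "cball x (d * R) \<subseteq> \<Omega>" using K'\<Omega> by blast
      show "\<And>l z. l \<in> LL (Suc p) \<Longrightarrow> z \<in> cball x (d * R) \<Longrightarrow> norm (pdiffs (l @ l\<alpha>) f z) \<le> B"
        using Bb cx by blast
      show "0 \<le> R" using R0 by simp
      show "2 * (real CARD('n) ^ Suc p * B) * R \<le> 1" using RM by (simp add: M_def)
    qed
    ultimately show "norm (Dalpha \<alpha> (conv_Omega \<Omega> f \<phi>) x - Dalpha \<alpha> f x) \<le> Rphi \<phi> ^ p"
      by (simp add: R_def)
  qed
qed

end
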